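(* Let $\xi\in(0,1)$, let $\rho(x)=\sum_{j\ge2}\rho_jx^{j-1}$ be a degree distribution with average degree $a$ (i.e. $1/a=\int_0^1\rho(x)dx$) and maximal degree at most $k_ca$ for a constant $k_c$. Then for every $x\in(0,\xi]$, $$\frac{d^2}{dx^2}[\rho(1-x)]\le -\frac{k_ca}{1-\xi}\,\frac{d}{dx}[\rho(1-x)].$$
   Context: A degree distribution is a polynomial $\rho(x)=\sum_{j\ge2}\rho_jx^{j-1}$ with $\rho_j\ge0$ and $\sum_j\rho_j=1$; its maximal degree is the largest $j$ with $\rho_j\ne0$. *)

theory Defs
  imports "HOL-Analysis.Analysis"
begin

definition degree_distribution :: "(nat \<Rightarrow> real) \<Rightarrow> bool" where
  "degree_distribution r \<longleftrightarrow>
     (\<forall>j. 0 \<le> r j) \<and> (\<forall>j<2. r j = 0) \<and> finite {j. r j \<noteq> 0} \<and>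
     (\<Sum>j\<in>{j. r j \<noteq> 0}. r j) = 1"

definition dd_poly :: "(nat \<Rightarrow> real) \<Rightarrow> real \<Rightarrow> real" where
  "dd_poly r x = (\<Sum>j\<in>{j. r j \<noteq> 0}. r j * x ^ (j - 1))"

definition max_degree :: "(nat \<Rightarrow> real) \<Rightarrow> nat" where
  "max_degree r = Max {j. r j \<noteq> 0}"

end

theory Submission
  imports Defs
begin

lemma pow1m_deriv: "((\<lambda>y::real. (1 - y) ^ n) has_real_derivative (- (real n * (1 - y) ^ (n - 1)))) (at y)"
  by (auto intro!: derivative_eq_intros)

lemma termwise:
  fixes x \<xi> K rj :: real and j :: nat
  assumes "0 \<le> rj" "0 < x" "x \<le> \<xi>" "\<xi> < 1" "real j \<le> K"
  shows "rj * (real (j - 1) * real (j - 2) * (1 - x) ^ (j - 3))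
     \<le> rj * (K / (1 - \<xi>) * real (j - 1) * (1 - x) ^ (j - 2))"
proof (rule mult_left_mono[OF _ assms(1)])
  have K0: "0 \<le> K" using assms(5) by (meson of_nat_0_le_iff order_trans)
  have c: "K \<le> K / (1 - \<xi>) * (1 - x)"
  proof -
    have "K = K / (1 - \<xi>) * (1 - \<xi>)" using assms by auto
    also have "\<dots> \<le> K / (1 - \<xi>) * (1 - x)"
      using assms K0 by (intro mult_left_mono) auto
    finally show ?thesis .
  qed
  show "real (j - 1) * real (j - 2) * (1 - x) ^ (j - 3)
     \<le> K / (1 - \<xi>) * real (j - 1) * (1 - x) ^ (j - 2)"
  proof (cases "j \<le> 2")
    case True
    then have "real (j - 2) = 0" by simp
    then show ?thesis using assms K0 by simp
  next
    case False
    then have e: "(1 - x) ^ (j - 2) = (1 - x) * (1 - x) ^ (j - 3)"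
      by (metis Suc_diff_Suc numeral_2_eq_2 numeral_3_eq_3 not_le power_Suc)
    have jj: "real (j - 2) \<le> K / (1 - \<xi>) * (1 - x)" using False assms(5) c by simp
    have p: "0 \<le> real (j - 1) * (1 - x) ^ (j - 3)" using assms by simp
    have "real (j - 1) * real (j - 2) * (1 - x) ^ (j - 3) = real (j - 2) * (real (j - 1) * (1 - x) ^ (j - 3))"
      by simp
    also have "\<dots> \<le> (K / (1 - \<xi>) * (1 - x)) * (real (j - 1) * (1 - x) ^ (j - 3))"
      using jj p by (rule mult_right_mono)
    also have "\<dots> = K / (1 - \<xi>) * real (j - 1) * (1 - x) ^ (j - 2)"
      unfolding e by simp
    finally show ?thesis .
  qed
qed

theorem proposition2:
  fixes r :: "nat \<Rightarrow> real" and \<xi> a k\<^sub>c x :: real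
  assumes "0 < \<xi>" and "\<xi> < 1"
    and "degree_distribution r"
    and "1 / a = integral {0..1} (dd_poly r)"
    and "real (max_degree r) \<le> k\<^sub>c * a"
    and "0 < x" and "x \<le> \<xi>"
  shows "deriv (deriv (\<lambda>y. dd_poly r (1 - y))) x
           \<le> - (k\<^sub>c * a / (1 - \<xi>)) * deriv (\<lambda>y. dd_poly r (1 - y)) x"
proof -
  define S where "S = {j. r j \<noteq> 0}"
  have fin: "finite S" using assms(3) unfolding degree_distribution_def S_def by simp
  have nn: "\<And>j. 0 \<le> r j" using assms(3) unfolding degree_distribution_def by simp
  define f1 where "f1 = (\<lambda>y. \<Sum>j\<in>S. r j * (- (real (j - 1) * (1 - y) ^ (j - 1 - 1))))"
  define f2 where "f2 = (\<lambda>y. \<Sum>j\<in>S. r j * (- (real (j - 1) * (- (real (j - 1 - 1) * (1 - y) ^ (j - 1 - 1 - 1))))))"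
  have d1: "((\<lambda>y. dd_poly r (1 - y)) has_real_derivative f1 y) (at y)" for y
    unfolding dd_poly_def f1_def S_def[symmetric]
    by (intro DERIV_sum DERIV_cmult pow1m_deriv)
  have d2: "(f1 has_real_derivative f2 y) (at y)" for y
    unfolding f1_def f2_def
    by (intro DERIV_sum DERIV_cmult DERIV_minus pow1m_deriv)
  have D1: "deriv (\<lambda>y. dd_poly r (1 - y)) = f1"
    using d1 DERIV_imp_deriv by blast
  have D2: "deriv f1 x = f2 x" using d2 DERIV_imp_deriv by blast
  have "f2 x = (\<Sum>j\<in>S. r j * (real (j - 1) * real (j - 2) * (1 - x) ^ (j - 3)))"
    unfolding f2_def by (intro sum.cong) (auto simp: diff_diff_left numeral_2_eq_2 numeral_3_eq_3)
  also have "\<dots> \<le> (\<Sum>j\<in>S. r j * (k\<^sub>c * a / (1 - \<xi>) * real (j - 1) * (1 - x) ^ (j - 2)))"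
  proof (rule sum_mono)
    fix j assume "j \<in> S"
    then have "j \<le> max_degree r" unfolding max_degree_def S_def[symmetric] using fin by simp
    then have "real j \<le> k\<^sub>c * a" using assms(5) by linarith
    then show "r j * (real (j - 1) * real (j - 2) * (1 - x) ^ (j - 3))
     \<le> r j * (k\<^sub>c * a / (1 - \<xi>) * real (j - 1) * (1 - x) ^ (j - 2))"
      using termwise nn assms by blast
  qed
  also have "\<dots> = - (k\<^sub>c * a / (1 - \<xi>)) * f1 x"
    unfolding f1_def sum_distrib_left by (intro sum.cong) (auto simp: diff_diff_left numeral_2_eq_2)
  finally show ?thesis using D1 D2 by simp
qed

end
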